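(* For every $n\ge1$, $$\tilde S^{\,n-1}_{e_0}\big(e_+(z)\big)=\prod_{k=2}^n\big(1-q^{-2(k-1)}\big)\,e_+(z)^n,\qquad S^{\,n-1}_{e_0}\big(e_-(z)\big)=\prod_{k=2}^n\big(1-q^{2(k-1)}\big)\,e_-(z)^n,$$ $$S^{\,n-1}_{f_0}\big(f_+(z)\big)=\prod_{k=2}^n\big(q^{-2(k-1)}-1\big)\,f_+(z)^n,\qquad \tilde S^{\,n-1}_{f_0}\big(f_-(z)\big)=\prod_{k=2}^n\big(q^{2(k-1)}-1\big)\,f_-(z)^n.$$
   Context: $U=U_q(\widehat{\mathfrak{sl}}_2)$ in the Drinfeld new realization: currents $e(z)=\sum_ne_nz^{-n}$, $f(z)=\sum_nf_nz^{-n}$ with $(z-q^2w)e(z)e(w)=(q^2z-w)e(w)e(z)$, $(z-q^{-2}w)f(z)f(w)=(q^{-2}z-w)f(w)f(z)$, and $k=\psi^+_0$ with $ke_nk^{-1}=q^2e_n$, $kf_nk^{-1}=q^{-2}f_n$; $q$ not a root of unity. Half-currents: $e_+(z)=\sum_{n\ge0}e_nz^{-n}$, $e_-(z)=-\sum_{n<0}e_nz^{-n}$, $f_+(z)=\sum_{n>0}f_nz^{-n}$, $f_-(z)=-\sum_{n\le0}f_nz^{-n}$; $e_\pm(z)^n$, $f_\pm(z)^n$ are powers as formal series. Screening operators (applied coefficientwise): $S_{e_0}(x)=e_0x-kxk^{-1}e_0$, $S_{f_0}(x)=xf_0-f_0kxk^{-1}$, $\tilde S_{e_0}(x)=xe_0-e_0k^{-1}xk$,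 $\tilde S_{f_0}(x)=f_0x-k^{-1}xkf_0$. Empty products equal $1$. *)

theory Defs
  imports "HOL-Computational_Algebra.Formal_Power_Series"
begin

definition central_scalars :: "('k::field \<Rightarrow> 'a::ring_1) \<Rightarrow> bool" where
  "central_scalars sc \<longleftrightarrow>
     (\<forall>x y. sc (x + y) = sc x + sc y) \<and> (\<forall>x y. sc (x * y) = sc x * sc y) \<and>
     sc 1 = 1 \<and> (\<forall>x a. sc x * a = a * sc x)"

definition fps_cmap :: "('a \<Rightarrow> 'b) \<Rightarrow> 'a fps \<Rightarrow> 'b fps" where
  "fps_cmap g X = Abs_fps (\<lambda>i. g (fps_nth X i))"

text \<open>Half currents. e_+ and f_+ are power series in z^{-1}; e_- and f_- are
  power series in z. The coefficient at index j is the coefficient of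
  z^{-j} (resp. z^{j}).\<close>
definition e_plus :: "(int \<Rightarrow> 'a::ring_1) \<Rightarrow> 'a fps" where
  "e_plus e = Abs_fps (\<lambda>j. e (int j))"
definition e_minus :: "(int \<Rightarrow> 'a::ring_1) \<Rightarrow> 'a fps" where
  "e_minus e = Abs_fps (\<lambda>j. if j = 0 then 0 else - e (- int j))"
definition f_plus :: "(int \<Rightarrow> 'a::ring_1) \<Rightarrow> 'a fps" where
  "f_plus f = Abs_fps (\<lambda>j. if j = 0 then 0 else f (int j))"
definition f_minus :: "(int \<Rightarrow> 'a::ring_1) \<Rightarrow> 'a fps" where
  "f_minus f = Abs_fps (\<lambda>j. - f (- int j))"

definition S_e0 :: "(int \<Rightarrow> 'a::ring_1) \<Rightarrow> 'a \<Rightarrow> 'a \<Rightarrow> 'a \<Rightarrow> 'a" where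
  "S_e0 e k kinv x = e 0 * x - k * x * kinv * e 0"
definition S_f0 :: "(int \<Rightarrow> 'a::ring_1) \<Rightarrow> 'a \<Rightarrow> 'a \<Rightarrow> 'a \<Rightarrow> 'a" where
  "S_f0 f k kinv x = x * f 0 - f 0 * k * x * kinv"
definition St_e0 :: "(int \<Rightarrow> 'a::ring_1) \<Rightarrow> 'a \<Rightarrow> 'a \<Rightarrow> 'a \<Rightarrow> 'a" where
  "St_e0 e k kinv x = x * e 0 - e 0 * kinv * x * k"
definition St_f0 :: "(int \<Rightarrow> 'a::ring_1) \<Rightarrow> 'a \<Rightarrow> 'a \<Rightarrow> 'a \<Rightarrow> 'a" where
  "St_f0 f k kinv x = f 0 * x - kinv * x * k * f 0"

end

theory Submission
  imports Defs
begin



lemma sc_add: "central_scalars sc \<Longrightarrow> sc (x + y) = sc x + sc y"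
  unfolding central_scalars_def by blast
lemma sc_mult: "central_scalars sc \<Longrightarrow> sc (x * y) = sc x * sc y"
  unfolding central_scalars_def by blast
lemma sc_one: "central_scalars sc \<Longrightarrow> sc 1 = 1"
  unfolding central_scalars_def by blast
lemma sc_central: "central_scalars sc \<Longrightarrow> sc x * a = a * sc x"
  unfolding central_scalars_def by blast
lemma sc_zero: "central_scalars sc \<Longrightarrow> sc 0 = 0"
  using sc_add[of sc 0 0] by simp
lemma sc_uminus: "central_scalars sc \<Longrightarrow> sc (- x) = - sc x"
  using sc_add[of sc x "-x"] sc_zero[of sc] by (simp add: minus_unique[symmetric])
lemma sc_diff: "central_scalars sc \<Longrightarrow> sc (x - y) = sc x - sc y"
  using sc_add[of sc x "-y"] sc_uminus[of sc y] by simp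
lemma sc_power: "central_scalars sc \<Longrightarrow> sc (x ^ n) = sc x ^ n"
  by (induction n) (simp_all add: sc_one sc_mult)

lemma rel'_lem:
  fixes A B C D :: "'a::ring_1"
  assumes "A - B = C - D" shows "A - C = B - D"
  using assms by (metis add_diff_cancel_left' diff_add_eq diff_diff_eq2 diff_eq_eq)

lemma telescope:
  fixes g :: "int \<Rightarrow> 'a::ring_1" and Qa :: 'a
  assumes rel: "\<forall>m l. g (m + 1) * g l - Qa * g m * g (l + 1) = Qa * g l * g (m + 1) - g (l + 1) * g m"
  defines "C \<equiv> \<lambda>a b. g a * g b - Qa * g b * g a"
  shows "(\<Sum>i\<le>j. C (int i) (int j - int i)) + (\<Sum>i\<le>j. C (int i) (int j - int i)) = C 0 (int j) + C 0 (int j)"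
proof -
  have rel': "C (m+1) l = - C (l+1) m" for m l
  proof -
    have "g (m + 1) * g l - Qa * g l * g (m + 1) = Qa * g m * g (l + 1) - g (l + 1) * g m"
      using rel'_lem[OF rel[rule_format, of m l]] .
    then show ?thesis unfolding C_def by simp
  qed
  define T where "T = (\<Sum>i\<le>j. C (int i) (int j - int i))"
  have s1: "T = (\<Sum>i\<le>j. - C (int j - int i + 1) (int i - 1))"
    unfolding T_def
  proof (rule sum.cong)
    fix i assume "i \<in> {..j}"
    show "C (int i) (int j - int i) = - C (int j - int i + 1) (int i - 1)"
      using rel'[of "int i - 1" "int j - int i"] by simp
  qed simp
  have s2: "(\<Sum>i\<le>j. - C (int j - int i + 1) (int i - 1)) = (\<Sum>i\<le>j. - C (int i + 1) (int j - int i - 1))"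
  proof -
    have "(\<Sum>i\<le>j. - C (int j - int i + 1) (int i - 1)) = (\<Sum>i=0..j. - C (int j - int i + 1) (int i - 1))"
      by (simp add: atLeast0AtMost)
    also have "\<dots> = (\<Sum>i=0..j. - C (int j - int (j + 0 - i) + 1) (int (j + 0 - i) - 1))"
      by (rule sum.atLeastAtMost_rev)
    also have "\<dots> = (\<Sum>i=0..j. - C (int i + 1) (int j - int i - 1))"
      by (rule sum.cong) (auto simp: of_nat_diff)
    finally show ?thesis by (simp add: atLeast0AtMost)
  qed
  have s3: "(\<Sum>i\<le>Suc j. C (int i) (int j - int i)) = C 0 (int j) + (\<Sum>i\<le>j. C (int i + 1) (int j - int i - 1))"
    by (simp only: sum.atMost_Suc_shift) (simp add: algebra_simps)
  have s4: "(\<Sum>i\<le>Suc j. C (int i) (int j - int i)) = T + C (int j + 1) (-1)"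
    by (simp add: T_def add.commute)
  have s5: "C (int j + 1) (-1) = - C 0 (int j)"
    using rel'[of "int j" "-1"] by simp
  have "T = - (\<Sum>i\<le>j. C (int i + 1) (int j - int i - 1))"
    using s1 s2 by (simp add: sum_negf)
  also have "(\<Sum>i\<le>j. C (int i + 1) (int j - int i - 1)) = T + C (int j + 1) (-1) - C 0 (int j)"
    using s3 s4 by (simp add: algebra_simps)
  finally have "T = - (T - C 0 (int j) - C 0 (int j))" using s5 by simp
  then have "T + T = C 0 (int j) + C 0 (int j)"
    by (metis add.commute diff_add_cancel diff_diff_eq2 minus_diff_eq)
  then show ?thesis unfolding T_def .
qed



lemma keyC:
  fixes g :: "int \<Rightarrow> 'a::ring_1" and Qa :: 'a
  assumes rel: "\<forall>m l. g (m + 1) * g l - Qa * g m * g (l + 1) = Qa * g l * g (m + 1) - g (l + 1) * g m"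
    and half: "\<forall>x::'a. h * (x + x) = x"
  shows "g 0 * g (int j) - Qa * g (int j) * g 0
     = (\<Sum>i\<le>j. g (int i) * g (int j - int i)) - Qa * (\<Sum>i\<le>j. g (int i) * g (int j - int i))"
proof -
  define C where "C \<equiv> \<lambda>a b. g a * g b - Qa * g b * g a"
  define S where "S = (\<Sum>i\<le>j. g (int i) * g (int j - int i))"
  have tel: "(\<Sum>i\<le>j. C (int i) (int j - int i)) + (\<Sum>i\<le>j. C (int i) (int j - int i)) = C 0 (int j) + C 0 (int j)"
    using telescope[OF rel] unfolding C_def by simp
  have T: "(\<Sum>i\<le>j. C (int i) (int j - int i)) = C 0 (int j)"
    using tel half by metis
  have refl: "(\<Sum>i\<le>j. g (int j - int i) * g (int i)) = S"
  proof -
    have "(\<Sum>i\<le>j. g (int j - int i) * g (int i)) = (\<Sum>i=0..j. g (int j - int i) * g (int i))"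
      by (simp add: atLeast0AtMost)
    also have "\<dots> = (\<Sum>i=0..j. g (int j - int (j + 0 - i)) * g (int (j + 0 - i)))"
      by (rule sum.atLeastAtMost_rev)
    also have "\<dots> = (\<Sum>i=0..j. g (int i) * g (int j - int i))"
      by (rule sum.cong) (auto simp: of_nat_diff)
    finally show ?thesis by (simp add: atLeast0AtMost S_def)
  qed
  have "(\<Sum>i\<le>j. C (int i) (int j - int i)) = S - (\<Sum>i\<le>j. Qa * (g (int j - int i) * g (int i)))"
    unfolding C_def S_def by (simp add: sum_subtractf mult.assoc)
  also have "\<dots> = S - Qa * S"
    by (simp add: sum_distrib_left[symmetric] refl)
  finally show ?thesis using T unfolding C_def S_def by simp
qed

lemma sqP: "fps_nth (Abs_fps (\<lambda>j. g (int j)) ^ 2) j = (\<Sum>i\<le>j. g (int i) * g (int j - int i))"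
  by (auto simp: power2_eq_square fps_mult_nth atLeast0AtMost of_nat_diff intro!: sum.cong)

lemma sqN:
  fixes g :: "int \<Rightarrow> 'a::ring_1"
  assumes "j \<ge> 1"
  shows "fps_nth (Abs_fps (\<lambda>j. if j = 0 then 0 else g (int j)) ^ 2) j
    = (\<Sum>i\<le>j. g (int i) * g (int j - int i)) - g 0 * g (int j) - g (int j) * g 0"
proof -
  have "fps_nth (Abs_fps (\<lambda>j. if j = 0 then 0 else g (int j)) ^ 2) j
     = (\<Sum>i\<le>j. g (int i) * g (int j - int i) - (if i = 0 then g 0 * g (int j) else 0)
                 - (if i = j then g (int j) * g 0 else 0))"
    using assms by (auto simp: power2_eq_square fps_mult_nth atLeast0AtMost of_nat_diff intro!: sum.cong)
  also have "\<dots> = (\<Sum>i\<le>j. g (int i) * g (int j - int i)) - g 0 * g (int j) - g (int j) * g 0"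
    by (simp add: sum_subtractf)
  finally show ?thesis .
qed



lemma baseP:
  fixes g :: "int \<Rightarrow> 'a::ring_1" and Qa Qia :: 'a
  assumes rel: "\<forall>m l. g (m + 1) * g l - Qa * g m * g (l + 1) = Qa * g l * g (m + 1) - g (l + 1) * g m"
    and half: "\<forall>x::'a. h * (x + x) = x"
    and inv: "Qia * Qa = 1"
  shows "Abs_fps (\<lambda>j. g (int j)) * fps_const (g 0) - fps_const Qia * fps_const (g 0) * Abs_fps (\<lambda>j. g (int j))
          = fps_const (1 - Qia) * Abs_fps (\<lambda>j. g (int j)) ^ 2"
    and "fps_const (g 0) * Abs_fps (\<lambda>j. g (int j)) - fps_const Qa * Abs_fps (\<lambda>j. g (int j)) * fps_const (g 0)
          = fps_const (1 - Qa) * Abs_fps (\<lambda>j. g (int j)) ^ 2"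
proof -
  have K: "g 0 * g (int j) - Qa * g (int j) * g 0
     = (\<Sum>i\<le>j. g (int i) * g (int j - int i)) - Qa * (\<Sum>i\<le>j. g (int i) * g (int j - int i))" for j
    using keyC[OF rel half] .
  show "Abs_fps (\<lambda>j. g (int j)) * fps_const (g 0) - fps_const Qia * fps_const (g 0) * Abs_fps (\<lambda>j. g (int j))
          = fps_const (1 - Qia) * Abs_fps (\<lambda>j. g (int j)) ^ 2"
  proof (rule fps_ext)
    fix j
    define S where "S = (\<Sum>i\<le>j. g (int i) * g (int j - int i))"
    have "Qia * (g 0 * g (int j) - Qa * g (int j) * g 0) = Qia * (S - Qa * S)"
      using K[of j] unfolding S_def by simp
    then have "Qia * g 0 * g (int j) - g (int j) * g 0 = Qia * S - S"
      by (simp add: right_diff_distrib mult.assoc[symmetric] inv)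
    then have "g (int j) * g 0 - Qia * g 0 * g (int j) = (1 - Qia) * S"
      by (metis (no_types, lifting) left_diff_distrib minus_diff_eq mult_1)
    then show "fps_nth (Abs_fps (\<lambda>j. g (int j)) * fps_const (g 0) - fps_const Qia * fps_const (g 0) * Abs_fps (\<lambda>j. g (int j))) j
          = fps_nth (fps_const (1 - Qia) * Abs_fps (\<lambda>j. g (int j)) ^ 2) j"
      by (simp add: sqP S_def mult.assoc)
  qed
  show "fps_const (g 0) * Abs_fps (\<lambda>j. g (int j)) - fps_const Qa * Abs_fps (\<lambda>j. g (int j)) * fps_const (g 0)
          = fps_const (1 - Qa) * Abs_fps (\<lambda>j. g (int j)) ^ 2"
  proof (rule fps_ext)
    fix j
    show "fps_nth (fps_const (g 0) * Abs_fps (\<lambda>j. g (int j)) - fps_const Qa * Abs_fps (\<lambda>j. g (int j)) * fps_const (g 0)) j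
          = fps_nth (fps_const (1 - Qa) * Abs_fps (\<lambda>j. g (int j)) ^ 2) j"
      using K[of j] by (simp add: sqP left_diff_distrib mult.assoc)
  qed
qed

lemma baseN:
  fixes g :: "int \<Rightarrow> 'a::ring_1" and Qa Qia :: 'a
  assumes rel: "\<forall>m l. g (m + 1) * g l - Qa * g m * g (l + 1) = Qa * g l * g (m + 1) - g (l + 1) * g m"
    and half: "\<forall>x::'a. h * (x + x) = x"
    and inv: "Qia * Qa = 1"
  shows "Abs_fps (\<lambda>j. if j = 0 then 0 else g (int j)) * fps_const (g 0) - fps_const Qa * fps_const (g 0) * Abs_fps (\<lambda>j. if j = 0 then 0 else g (int j))
          = fps_const (Qa - 1) * Abs_fps (\<lambda>j. if j = 0 then 0 else g (int j)) ^ 2"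
    and "fps_const (g 0) * Abs_fps (\<lambda>j. if j = 0 then 0 else g (int j)) - fps_const Qia * Abs_fps (\<lambda>j. if j = 0 then 0 else g (int j)) * fps_const (g 0)
          = fps_const (Qia - 1) * Abs_fps (\<lambda>j. if j = 0 then 0 else g (int j)) ^ 2"
proof -
  define Y where "Y = Abs_fps (\<lambda>j. if j = 0 then 0 else g (int j))"
  have Y0: "fps_nth (Y ^ 2) 0 = 0" unfolding Y_def by (simp add: power2_eq_square fps_mult_nth)
  have R: "g (int j) * g 0 - Qa * g 0 * g (int j) = (Qa - 1) * fps_nth (Y ^ 2) j" if j: "j \<ge> 1" for j
  proof -
    define S where "S = (\<Sum>i\<le>j. g (int i) * g (int j - int i))"
    have K: "g 0 * g (int j) - Qa * g (int j) * g 0 = S - Qa * S"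
      using keyC[OF rel half] unfolding S_def .
    have K2: "(Qa - 1) * S = Qa * g (int j) * g 0 - g 0 * g (int j)"
      using K by (metis (no_types, lifting) left_diff_distrib minus_diff_eq mult_1)
    have Y2: "fps_nth (Y ^ 2) j = S - g 0 * g (int j) - g (int j) * g 0"
      unfolding Y_def S_def by (rule sqN[OF j])
    show ?thesis unfolding Y2 right_diff_distrib K2 by (simp add: algebra_simps)
  qed
  show "Abs_fps (\<lambda>j. if j = 0 then 0 else g (int j)) * fps_const (g 0) - fps_const Qa * fps_const (g 0) * Abs_fps (\<lambda>j. if j = 0 then 0 else g (int j))
          = fps_const (Qa - 1) * Abs_fps (\<lambda>j. if j = 0 then 0 else g (int j)) ^ 2"
    unfolding Y_def[symmetric]
  proof (rule fps_ext)
    fix j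
    show "fps_nth (Y * fps_const (g 0) - fps_const Qa * fps_const (g 0) * Y) j
          = fps_nth (fps_const (Qa - 1) * Y ^ 2) j"
    proof (cases "j = 0")
      case True then show ?thesis using Y0 by (simp add: Y_def)
    next
      case False then show ?thesis using R[of j] by (simp add: Y_def mult.assoc)
    qed
  qed
  show "fps_const (g 0) * Abs_fps (\<lambda>j. if j = 0 then 0 else g (int j)) - fps_const Qia * Abs_fps (\<lambda>j. if j = 0 then 0 else g (int j)) * fps_const (g 0)
          = fps_const (Qia - 1) * Abs_fps (\<lambda>j. if j = 0 then 0 else g (int j)) ^ 2"
    unfolding Y_def[symmetric]
  proof (rule fps_ext)
    fix j
    show "fps_nth (fps_const (g 0) * Y - fps_const Qia * Y * fps_const (g 0)) j
          = fps_nth (fps_const (Qia - 1) * Y ^ 2) j"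
    proof (cases "j = 0")
      case True then show ?thesis using Y0 by (simp add: Y_def)
    next
      case False
      define Z where "Z = fps_nth (Y ^ 2) j"
      have "Qia * (g (int j) * g 0 - Qa * g 0 * g (int j)) = Qia * ((Qa - 1) * Z)"
        using R[of j] False unfolding Z_def by simp
      then have "Qia * g (int j) * g 0 - g 0 * g (int j) = (1 - Qia) * Z"
        by (simp add: right_diff_distrib left_diff_distrib mult.assoc[symmetric] inv)
      then have "g 0 * g (int j) - Qia * g (int j) * g 0 = (Qia - 1) * Z"
        by (metis minus_diff_eq mult_minus_left)
      then show ?thesis using False by (simp add: Y_def Z_def mult.assoc)
    qed
  qed
qed



lemma rel_neg:
  fixes g :: "int \<Rightarrow> 'a::ring_1" and Qa Qb :: 'a
  assumes rel: "\<forall>m l. g (m + 1) * g l - Qa * g m * g (l + 1) = Qa * g l * g (m + 1) - g (l + 1) * g m"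
    and inv: "Qb * Qa = 1"
  shows "\<forall>m l. g (- (m + 1)) * g (- l) - Qb * g (- m) * g (- (l + 1)) = Qb * g (- l) * g (- (m + 1)) - g (- (l + 1)) * g (- m)"
proof (intro allI)
  fix m l :: int
  have h: "g (- l) * g (- m - 1) - Qa * g (- l - 1) * g (- m) = Qa * g (- m - 1) * g (- l) - g (- m) * g (- l - 1)"
    using rel[rule_format, of "- l - 1" "- m - 1"] by simp
  then have "Qb * (g (- l) * g (- m - 1) - Qa * g (- l - 1) * g (- m)) = Qb * (Qa * g (- m - 1) * g (- l) - g (- m) * g (- l - 1))"
    by simp
  then have H: "Qb * g (- l) * g (- m - 1) - g (- l - 1) * g (- m) = g (- m - 1) * g (- l) - Qb * g (- m) * g (- l - 1)"
    by (simp add: right_diff_distrib mult.assoc[symmetric] inv)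
  have e1: "- (m + 1) = - m - 1" and e2: "- (l + 1) = - l - 1" by simp_all
  show "g (- (m + 1)) * g (- l) - Qb * g (- m) * g (- (l + 1)) = Qb * g (- l) * g (- (m + 1)) - g (- (l + 1)) * g (- m)"
    unfolding e1 e2 by (rule H[symmetric])
qed

lemma central_mult: "(\<forall>Y. a * Y = Y * a) \<Longrightarrow> (\<forall>Y. b * Y = Y * b) \<Longrightarrow> (\<forall>Y::'a::ring_1. (a * b) * Y = Y * (a * b))"
  by (metis mult.assoc)
lemma central_diff: "(\<forall>Y. a * Y = Y * a) \<Longrightarrow> (\<forall>Y. b * Y = Y * b) \<Longrightarrow> (\<forall>Y::'a::ring_1. (a - b) * Y = Y * (a - b))"
  by (simp add: left_diff_distrib right_diff_distrib)
lemma central_one: "\<forall>Y::'a::ring_1. 1 * Y = Y * 1" by simp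
lemma central_power: "(\<forall>Y. a * Y = Y * a) \<Longrightarrow> (\<forall>Y::'a::ring_1. a ^ n * Y = Y * a ^ n)"
proof (induction n)
  case (Suc n)
  have "\<forall>Y. a ^ n * Y = Y * a ^ n" using Suc by simp
  then show ?case unfolding power_Suc by (intro central_mult Suc.prems)
qed simp

lemma powR:
  fixes X B r e :: "'a::ring_1"
  assumes cr: "\<forall>Y. r * Y = Y * r" and ce: "\<forall>Y. e * Y = Y * e"
    and base: "X * B - r * B * X = e * (1 - r) * X ^ 2"
  shows "X ^ n * B - r ^ n * B * X ^ n = e * (1 - r ^ n) * X ^ Suc n"
proof (induction n)
  case 0 show ?case by simp
next
  case (Suc n)
  have XB: "X * B = r * B * X + e * (1 - r) * X ^ 2" using base by (simp add: diff_eq_eq)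
  have IH: "X ^ n * B = r ^ n * B * X ^ n + e * (1 - r ^ n) * X ^ Suc n" using Suc.IH by (simp add: diff_eq_eq)
  have c1: "\<forall>Y. (e * (1 - r)) * Y = Y * (e * (1 - r))"
    by (intro central_mult central_diff ce cr central_one)
  have c2: "\<forall>Y. (e * (1 - r ^ n)) * Y = Y * (e * (1 - r ^ n))"
    by (intro central_mult central_diff ce central_power cr central_one)
  have "X ^ Suc n * B = X ^ n * (X * B)" by (simp only: power_Suc2 mult.assoc)
  also have "\<dots> = X ^ n * (r * B * X) + X ^ n * (e * (1 - r) * X ^ 2)" by (simp only: XB distrib_left)
  also have "X ^ n * (r * B * X) = r * (X ^ n * B) * X"
  proof -
    have "X ^ n * r = r * X ^ n" using cr by simp
    then show ?thesis by (simp only: mult.assoc[symmetric])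
  qed
  also have "X ^ n * (e * (1 - r) * X ^ 2) = e * (1 - r) * X ^ Suc (Suc n)"
  proof -
    have "X ^ n * (e * (1 - r)) = (e * (1 - r)) * X ^ n" using c1 by simp
    then have "X ^ n * (e * (1 - r) * X ^ 2) = e * (1 - r) * (X ^ n * X ^ 2)"
      by (simp only: mult.assoc[symmetric])
    also have "X ^ n * X ^ 2 = X ^ Suc (Suc n)" unfolding power_add[symmetric] by simp
    finally show ?thesis .
  qed
  also have "r * (X ^ n * B) * X = r ^ Suc n * B * X ^ Suc n + r * (e * (1 - r ^ n)) * X ^ Suc (Suc n)"
  proof -
    have a: "r * (r ^ n * B * X ^ n) * X = r ^ Suc n * B * X ^ Suc n"
      by (simp add: mult.assoc power_commutes)
    have b: "r * (e * (1 - r ^ n) * X ^ Suc n) * X = r * (e * (1 - r ^ n)) * X ^ Suc (Suc n)"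
      by (simp only: mult.assoc power_Suc2[of X "Suc n"])
    show ?thesis unfolding IH by (simp only: distrib_left distrib_right a b)
  qed
  finally have "X ^ Suc n * B = r ^ Suc n * B * X ^ Suc n + (r * (e * (1 - r ^ n)) + e * (1 - r)) * X ^ Suc (Suc n)"
    by (simp only: distrib_right add.assoc)
  moreover have "r * (e * (1 - r ^ n)) + e * (1 - r) = e * (1 - r ^ Suc n)"
  proof -
    have "r * e = e * r" using cr by simp
    then show ?thesis by (simp add: algebra_simps) (metis mult.assoc)
  qed
  ultimately show ?case by simp
qed

lemma powL:
  fixes X B r e :: "'a::ring_1"
  assumes cr: "\<forall>Y. r * Y = Y * r" and ce: "\<forall>Y. e * Y = Y * e"
    and base: "B * X - r * X * B = e * (1 - r) * X ^ 2"
  shows "B * X ^ n - r ^ n * X ^ n * B = e * (1 - r ^ n) * X ^ Suc n"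
proof (induction n)
  case 0 show ?case by simp
next
  case (Suc n)
  have XB: "B * X = r * X * B + e * (1 - r) * X ^ 2" using base by (simp add: diff_eq_eq)
  have IH: "B * X ^ n = r ^ n * X ^ n * B + e * (1 - r ^ n) * X ^ Suc n" using Suc.IH by (simp add: diff_eq_eq)
  have c2: "\<forall>Y. (e * (1 - r ^ n)) * Y = Y * (e * (1 - r ^ n))"
    by (intro central_mult central_diff ce central_power cr central_one)
  have c3: "\<forall>Y. (r ^ n) * Y = Y * (r ^ n)"
    by (intro central_power cr)
  have "B * X ^ Suc n = (B * X) * X ^ n" by (simp only: power_Suc mult.assoc)
  also have "\<dots> = (r * X * B) * X ^ n + (e * (1 - r) * X ^ 2) * X ^ n" by (simp only: XB distrib_right)
  also have "(r * X * B) * X ^ n = r * X * (B * X ^ n)" by (simp only: mult.assoc)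
  also have "(e * (1 - r) * X ^ 2) * X ^ n = e * (1 - r) * X ^ Suc (Suc n)"
  proof -
    have "(e * (1 - r) * X ^ 2) * X ^ n = e * (1 - r) * (X ^ 2 * X ^ n)" by (simp only: mult.assoc)
    also have "X ^ 2 * X ^ n = X ^ Suc (Suc n)" unfolding power_add[symmetric] by simp
    finally show ?thesis .
  qed
  also have "r * X * (B * X ^ n) = r ^ Suc n * X ^ Suc n * B + r * (e * (1 - r ^ n)) * X ^ Suc (Suc n)"
    unfolding IH
  proof -
    have "X * r ^ n = r ^ n * X" using c3 by simp
    then have h1: "r * X * r ^ n = r * r ^ n * X" by (simp add: mult.assoc)
    have a: "r * X * (r ^ n * X ^ n * B) = r ^ Suc n * X ^ Suc n * B"
    proof -
      have "r * X * (r ^ n * X ^ n * B) = (r * X * r ^ n) * X ^ n * B" by (simp only: mult.assoc)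
      also have "\<dots> = r * r ^ n * X * X ^ n * B" by (simp only: h1)
      also have "\<dots> = r ^ Suc n * X ^ Suc n * B" by (simp only: mult.assoc power_Suc)
      finally show ?thesis .
    qed
    have "X * (e * (1 - r ^ n)) = (e * (1 - r ^ n)) * X" using c2 by simp
    then have h2: "r * X * (e * (1 - r ^ n)) = r * (e * (1 - r ^ n)) * X" by (metis mult.assoc)
    have b: "r * X * (e * (1 - r ^ n) * X ^ Suc n) = r * (e * (1 - r ^ n)) * X ^ Suc (Suc n)"
    proof -
      have "r * X * (e * (1 - r ^ n) * X ^ Suc n) = (r * X * (e * (1 - r ^ n))) * X ^ Suc n" by (simp only: mult.assoc)
      also have "\<dots> = r * (e * (1 - r ^ n)) * X * X ^ Suc n" by (simp only: h2)
      also have "\<dots> = r * (e * (1 - r ^ n)) * X ^ Suc (Suc n)" by (simp only: mult.assoc power_Suc)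
      finally show ?thesis .
    qed
    show "r * X * (r ^ n * X ^ n * B + e * (1 - r ^ n) * X ^ Suc n) = r ^ Suc n * X ^ Suc n * B + r * (e * (1 - r ^ n)) * X ^ Suc (Suc n)"
      by (simp only: distrib_left a b)
  qed
  finally have "B * X ^ Suc n = r ^ Suc n * X ^ Suc n * B + (r * (e * (1 - r ^ n)) + e * (1 - r)) * X ^ Suc (Suc n)"
    by (simp only: distrib_right add.assoc)
  moreover have "r * (e * (1 - r ^ n)) + e * (1 - r) = e * (1 - r ^ Suc n)"
  proof -
    have "r * e = e * r" using cr by simp
    then show ?thesis by (simp add: algebra_simps) (metis mult.assoc)
  qed
  ultimately show ?case by simp
qed



lemma fps_cmap_nth [simp]: "fps_nth (fps_cmap \<phi> X) i = \<phi> (fps_nth X i)"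
  by (simp add: fps_cmap_def)

lemma hom_sum:
  assumes add: "\<forall>x y. \<phi> (x + y) = \<phi> x + \<phi> y" and z: "\<phi> 0 = 0"
  shows "\<phi> (sum f S) = sum (\<lambda>i. \<phi> (f i)) S"
proof (cases "finite S")
  case True then show ?thesis by (induction S rule: finite_induct) (simp_all add: z add)
qed (simp add: z)

lemma cmap_mult:
  fixes \<phi> :: "'a::ring_1 \<Rightarrow> 'a"
  assumes mul: "\<forall>x y. \<phi> (x * y) = \<phi> x * \<phi> y" and add: "\<forall>x y. \<phi> (x + y) = \<phi> x + \<phi> y" and z: "\<phi> 0 = 0"
  shows "fps_cmap \<phi> (A * B) = fps_cmap \<phi> A * fps_cmap \<phi> B"
  by (rule fps_ext) (simp add: fps_mult_nth hom_sum[OF add z] mul)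

lemma fps_const_central:
  fixes c :: "'a::ring_1"
  assumes "\<forall>y. c * y = y * c" shows "\<forall>Y. fps_const c * Y = Y * fps_const c"
  using assms by (auto intro!: fps_ext)

lemma cmap_power:
  fixes \<phi> :: "'a::ring_1 \<Rightarrow> 'a"
  assumes mul: "\<forall>x y. \<phi> (x * y) = \<phi> x * \<phi> y" and add: "\<forall>x y. \<phi> (x + y) = \<phi> x + \<phi> y" and z: "\<phi> 0 = 0"
    and one: "\<phi> 1 = 1" and cX: "fps_cmap \<phi> X = fps_const c * X" and cc: "\<forall>y. c * y = y * c"
  shows "fps_cmap \<phi> (X ^ n) = fps_const (c ^ n) * X ^ n"
proof (induction n)
  case 0
  show ?case by (rule fps_ext) (simp add: one z)
next
  case (Suc n)
  have cn: "\<forall>Y. fps_const (c ^ n) * Y = Y * fps_const (c ^ n)"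
    by (rule fps_const_central) (intro central_power cc)
  have "fps_cmap \<phi> (X ^ Suc n) = (fps_const c * X) * (fps_const (c ^ n) * X ^ n)"
    by (simp only: power_Suc cmap_mult[OF mul add z] cX Suc.IH)
  also have "\<dots> = fps_const c * (X * fps_const (c ^ n)) * X ^ n" by (simp only: mult.assoc)
  also have "\<dots> = fps_const c * fps_const (c ^ n) * (X * X ^ n)" using cn by (simp only: mult.assoc)
  also have "\<dots> = fps_const (c ^ Suc n) * X ^ Suc n" by simp
  finally show ?case .
qed

lemma iter:
  fixes sc :: "'k::field \<Rightarrow> 'a::ring_1"
  assumes alg: "central_scalars sc"
    and lin: "\<forall>c Y. T (fps_const (sc c) * Y) = fps_const (sc c) * T Y"
    and step: "\<forall>n\<ge>1. T (X ^ n) = fps_const (sc (d n)) * X ^ Suc n"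
  shows "(T ^^ m) X = fps_const (sc (\<Prod>j=2..Suc m. d (j - 1))) * X ^ Suc m"
proof (induction m)
  case 0 show ?case by (simp add: sc_one[OF alg])
next
  case (Suc m)
  define P where "P = (\<Prod>j=2..Suc m. d (j - 1))"
  have "(T ^^ Suc m) X = T (fps_const (sc P) * X ^ Suc m)"
    using Suc.IH unfolding P_def by simp
  also have "\<dots> = fps_const (sc P) * T (X ^ Suc m)" by (rule lin[rule_format])
  also have "T (X ^ Suc m) = fps_const (sc (d (Suc m))) * X ^ Suc (Suc m)" by (rule step[rule_format]) simp
  also have "fps_const (sc P) * (fps_const (sc (d (Suc m))) * X ^ Suc (Suc m)) = 
     fps_const (sc (P * d (Suc m))) * X ^ Suc (Suc m)"
    by (simp add: sc_mult[OF alg] mult.assoc[symmetric])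
  also have "P * d (Suc m) = (\<Prod>j=2..Suc (Suc m). d (j - 1))"
    unfolding P_def by (simp add: prod.cl_ivl_Suc)
  finally show ?case .
qed

lemma sc_half:
  fixes sc :: "'k::field_char_0 \<Rightarrow> 'a::ring_1"
  assumes alg: "central_scalars sc"
  shows "\<forall>x. sc (inverse 2) * (x + x) = x"
proof
  fix x
  have "sc (inverse 2) * (x + x) = (sc (inverse 2) + sc (inverse 2)) * x"
    by (simp add: distrib_left distrib_right)
  also have "sc (inverse 2) + sc (inverse 2) = sc (inverse 2 + inverse 2)" by (rule sc_add[OF alg, symmetric])
  also have "inverse 2 + inverse (2::'k) = 1" by simp
  finally show "sc (inverse 2) * (x + x) = x" by (simp add: sc_one[OF alg])
qed

lemma sc_inv:
  fixes sc :: "'k::field \<Rightarrow> 'a::ring_1"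
  assumes alg: "central_scalars sc" and "a \<noteq> 0"
  shows "sc (inverse a) * sc a = 1" "sc a * sc (inverse a) = 1"
  using assms by (simp_all add: sc_mult[OF alg, symmetric] sc_one[OF alg])



lemma conj_hom:
  fixes a b :: "'a::ring_1"
  assumes ab: "a * b = 1" and ba: "b * a = 1"
  shows "\<forall>x y. a * (x * y) * b = (a * x * b) * (a * y * b)"
    and "\<forall>x y. a * (x + y) * b = a * x * b + a * y * b"
    and "a * 0 * b = 0" and "a * 1 * b = 1"
proof -
  show "\<forall>x y. a * (x * y) * b = (a * x * b) * (a * y * b)"
  proof (intro allI)
    fix x y
    have "(a * x * b) * (a * y * b) = a * x * (b * a) * y * b" by (simp add: mult.assoc)
    then show "a * (x * y) * b = (a * x * b) * (a * y * b)" by (simp add: ba mult.assoc)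
  qed
  show "\<forall>x y. a * (x + y) * b = a * x * b + a * y * b" by (simp add: distrib_left distrib_right)
  show "a * 0 * b = 0" by simp
  show "a * 1 * b = 1" by (simp add: ab)
qed

lemma conj_eig:
  fixes sc :: "'k::field \<Rightarrow> 'a::ring_1"
  assumes alg: "central_scalars sc" and ab: "a * b = 1" and ba: "b * a = 1"
    and h: "b * x * a = sc \<rho> * x" and r: "\<rho> \<noteq> 0"
  shows "a * x * b = sc (inverse \<rho>) * x"
proof -
  have "x = a * (b * x * a) * b" by (simp add: mult.assoc[symmetric] ab) (simp add: mult.assoc ab)
  also have "\<dots> = a * (sc \<rho> * x) * b" by (simp add: h)
  also have "\<dots> = sc \<rho> * (a * x * b)" by (metis mult.assoc sc_central[OF alg])
  finally have "sc (inverse \<rho>) * x = sc (inverse \<rho>) * sc \<rho> * (a * x * b)" by (simp add: mult.assoc)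
  then show ?thesis by (simp add: sc_inv[OF alg r])
qed

lemma one_minus_fps_const: "1 - fps_const (c::'a::ring_1) = fps_const (1 - c)"
  by (metis fps_const_1_eq_1 fps_const_sub)

lemma pull_sc:
  assumes alg: "central_scalars sc"
  shows "u * (sc c * y) = sc c * (u * y)"
  by (metis mult.assoc sc_central[OF alg])

lemma part1:
  fixes sc :: "'k::field_char_0 \<Rightarrow> 'a::ring_1"
    and q :: 'k and e :: "int \<Rightarrow> 'a" and k kinv :: 'a and n :: nat
  assumes alg: "central_scalars sc"
    and q_nz: "q \<noteq> 0"
    and k_inv: "k * kinv = 1" "kinv * k = 1"
    and ke: "\<forall>m. k * e m * kinv = sc (q ^ 2) * e m"
    and ee: "\<forall>m l. e (m + 1) * e l - sc (q ^ 2) * e m * e (l + 1)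
                 = sc (q ^ 2) * e l * e (m + 1) - e (l + 1) * e m"
    and n: "n \<ge> 1"
  shows "(fps_cmap (St_e0 e k kinv) ^^ (n - 1)) (e_plus e)
           = fps_const (sc (\<Prod>j=2..n. 1 - inverse q ^ (2 * (j - 1)))) * e_plus e ^ n"
proof -
  define X where "X = Abs_fps (\<lambda>j. e (int j))"
  define B where "B = fps_const (e 0)"
  define \<rho> where "\<rho> = inverse q ^ 2"
  define r where "r = fps_const (sc \<rho>)"
  define \<phi> where "\<phi> = (\<lambda>x. kinv * x * k)"
  have EX: "e_plus e = X" by (simp add: e_plus_def X_def)
  have half: "\<forall>x. sc (inverse 2) * (x + x) = x" by (rule sc_half[OF alg])
  have inv1: "sc \<rho> * sc (q ^ 2) = 1" unfolding \<rho>_def using q_nz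
    by (simp add: power_inverse sc_inv[OF alg])
  have base0: "X * B - fps_const (sc \<rho>) * B * X = fps_const (1 - sc \<rho>) * X ^ 2"
    unfolding X_def B_def by (rule baseP(1)[OF ee half inv1])
  have cr: "\<forall>Y. r * Y = Y * r" unfolding r_def
    by (rule fps_const_central) (simp add: sc_central[OF alg])
  have base: "X * B - r * B * X = 1 * (1 - r) * X ^ 2"
    using base0 by (simp add: r_def one_minus_fps_const)
  have pw: "X ^ m * B - r ^ m * B * X ^ m = 1 * (1 - r ^ m) * X ^ Suc m" for m
    by (rule powR[OF cr _ base]) simp
  have eig: "\<phi> (e m) = sc \<rho> * e m" for m
    unfolding \<phi>_def \<rho>_def
    using conj_eig[OF alg k_inv(2) k_inv(1) ke[rule_format, of m]] q_nz by (simp add: power_inverse)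
  have hom: "\<forall>x y. \<phi> (x * y) = \<phi> x * \<phi> y" "\<forall>x y. \<phi> (x + y) = \<phi> x + \<phi> y" "\<phi> 0 = 0" "\<phi> 1 = 1"
    unfolding \<phi>_def using conj_hom[OF k_inv(2) k_inv(1)] by auto
  have cX: "fps_cmap \<phi> X = fps_const (sc \<rho>) * X"
    by (rule fps_ext) (simp add: X_def eig)
  have cP: "fps_cmap \<phi> (X ^ m) = r ^ m * X ^ m" for m
    unfolding r_def fps_const_power
    by (rule cmap_power[OF hom cX]) (simp add: sc_central[OF alg])
  have op: "fps_cmap (St_e0 e k kinv) Y = Y * B - B * fps_cmap \<phi> Y" for Y
    by (rule fps_ext) (simp add: St_e0_def B_def \<phi>_def mult.assoc)
  have crm: "\<forall>Y. r ^ m * Y = Y * r ^ m" for m by (rule central_power[OF cr])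
  have step: "\<forall>m\<ge>1. fps_cmap (St_e0 e k kinv) (X ^ m) = fps_const (sc (1 - inverse q ^ (2 * m))) * X ^ Suc m"
  proof (intro allI impI)
    fix m :: nat
    have "fps_cmap (St_e0 e k kinv) (X ^ m) = X ^ m * B - B * (r ^ m * X ^ m)" by (simp add: op cP)
    also have "B * (r ^ m * X ^ m) = r ^ m * B * X ^ m" using crm[of m] by (metis mult.assoc)
    also have "X ^ m * B - r ^ m * B * X ^ m = 1 * (1 - r ^ m) * X ^ Suc m" by (rule pw)
    also have "1 * (1 - r ^ m) = fps_const (sc (1 - inverse q ^ (2 * m)))"
      by (simp add: r_def \<rho>_def sc_diff[OF alg] sc_one[OF alg] sc_power[OF alg] power_mult one_minus_fps_const)
    finally show "fps_cmap (St_e0 e k kinv) (X ^ m) = fps_const (sc (1 - inverse q ^ (2 * m))) * X ^ Suc m" .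
  qed
  have lin: "\<forall>c Y. fps_cmap (St_e0 e k kinv) (fps_const (sc c) * Y) = fps_const (sc c) * fps_cmap (St_e0 e k kinv) Y"
    by (intro allI, rule fps_ext) (simp only: fps_cmap_nth fps_mult_left_const_nth St_e0_def right_diff_distrib mult.assoc pull_sc[OF alg])
  have "(fps_cmap (St_e0 e k kinv) ^^ (n - 1)) X = fps_const (sc (\<Prod>j=2..Suc (n - 1). 1 - inverse q ^ (2 * (j - 1)))) * X ^ Suc (n - 1)"
    by (rule iter[OF alg lin step])
  then show ?thesis using n by (simp add: EX)
qed



lemma neg_fc: "- (fps_const ((a::'a::ring_1) - 1) * Z) = fps_const (1 - a) * Z"
  "- (fps_const (1 - (a::'a::ring_1)) * Z) = fps_const (a - 1) * Z"
  by (metis fps_const_neg minus_diff_eq mult_minus_left)+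

lemma part2:
  fixes sc :: "'k::field_char_0 \<Rightarrow> 'a::ring_1"
    and q :: 'k and e :: "int \<Rightarrow> 'a" and k kinv :: 'a and n :: nat
  assumes alg: "central_scalars sc"
    and q_nz: "q \<noteq> 0"
    and k_inv: "k * kinv = 1" "kinv * k = 1"
    and ke: "\<forall>m. k * e m * kinv = sc (q ^ 2) * e m"
    and ee: "\<forall>m l. e (m + 1) * e l - sc (q ^ 2) * e m * e (l + 1)
                 = sc (q ^ 2) * e l * e (m + 1) - e (l + 1) * e m"
    and n: "n \<ge> 1"
  shows "(fps_cmap (S_e0 e k kinv) ^^ (n - 1)) (e_minus e)
           = fps_const (sc (\<Prod>j=2..n. 1 - q ^ (2 * (j - 1)))) * e_minus e ^ n"
proof -
  define Y where "Y = Abs_fps (\<lambda>j. if j = 0 then 0 else e (- int j))"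
  define X where "X = - Y"
  define B where "B = fps_const (e 0)"
  define r where "r = fps_const (sc (q ^ 2))"
  define \<phi> where "\<phi> = (\<lambda>x. k * x * kinv)"
  have EX: "e_minus e = X" by (rule fps_ext) (simp add: e_minus_def X_def Y_def)
  have half: "\<forall>x. sc (inverse 2) * (x + x) = x" by (rule sc_half[OF alg])
  have inv1: "sc (inverse q ^ 2) * sc (q ^ 2) = 1" using q_nz
    by (simp add: power_inverse sc_inv[OF alg])
  have inv2: "sc (q ^ 2) * sc (inverse q ^ 2) = 1" using q_nz
    by (simp add: power_inverse sc_inv[OF alg])
  have rel': "\<forall>m l. e (- (m + 1)) * e (- l) - sc (inverse q ^ 2) * e (- m) * e (- (l + 1))
     = sc (inverse q ^ 2) * e (- l) * e (- (m + 1)) - e (- (l + 1)) * e (- m)"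
    by (rule rel_neg[OF ee inv1])
  have base0: "B * Y - fps_const (sc (q ^ 2)) * Y * B = fps_const (sc (q ^ 2) - 1) * Y ^ 2"
    using baseN(2)[where g="\<lambda>x. e (- x)" and Qa="sc (inverse q ^ 2)" and Qia="sc (q ^ 2)" and h="sc (inverse 2)",
        OF rel' half inv2]
    unfolding Y_def B_def by simp
  have cr: "\<forall>Y. r * Y = Y * r" unfolding r_def
    by (rule fps_const_central) (simp add: sc_central[OF alg])
  have base: "B * X - r * X * B = 1 * (1 - r) * X ^ 2"
  proof -
    have "B * X - r * X * B = - (B * Y - fps_const (sc (q ^ 2)) * Y * B)"
      by (simp add: X_def r_def)
    also have "\<dots> = 1 * (1 - r) * X ^ 2" unfolding base0
      by (simp add: X_def r_def one_minus_fps_const power2_eq_square neg_fc)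
    finally show ?thesis .
  qed
  have pw: "B * X ^ m - r ^ m * X ^ m * B = 1 * (1 - r ^ m) * X ^ Suc m" for m
    by (rule powL[OF cr _ base]) simp
  have hom: "\<forall>x y. \<phi> (x * y) = \<phi> x * \<phi> y" "\<forall>x y. \<phi> (x + y) = \<phi> x + \<phi> y" "\<phi> 0 = 0" "\<phi> 1 = 1"
    unfolding \<phi>_def using conj_hom[OF k_inv(1) k_inv(2)] by auto
  have cX: "fps_cmap \<phi> X = fps_const (sc (q ^ 2)) * X"
    by (rule fps_ext) (simp add: X_def Y_def \<phi>_def ke)
  have cP: "fps_cmap \<phi> (X ^ m) = r ^ m * X ^ m" for m
    unfolding r_def fps_const_power
    by (rule cmap_power[OF hom cX]) (simp add: sc_central[OF alg])
  have op: "fps_cmap (S_e0 e k kinv) Z = B * Z - fps_cmap \<phi> Z * B" for Z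
    by (rule fps_ext) (simp add: S_e0_def B_def \<phi>_def mult.assoc)
  have step: "\<forall>m\<ge>1. fps_cmap (S_e0 e k kinv) (X ^ m) = fps_const (sc (1 - q ^ (2 * m))) * X ^ Suc m"
  proof (intro allI impI)
    fix m :: nat
    have "fps_cmap (S_e0 e k kinv) (X ^ m) = B * X ^ m - r ^ m * X ^ m * B" by (simp add: op cP)
    also have "\<dots> = 1 * (1 - r ^ m) * X ^ Suc m" by (rule pw)
    also have "1 * (1 - r ^ m) = fps_const (sc (1 - q ^ (2 * m)))"
      by (simp add: r_def sc_diff[OF alg] sc_one[OF alg] sc_power[OF alg] power_mult one_minus_fps_const)
    finally show "fps_cmap (S_e0 e k kinv) (X ^ m) = fps_const (sc (1 - q ^ (2 * m))) * X ^ Suc m" .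
  qed
  have lin: "\<forall>c Z. fps_cmap (S_e0 e k kinv) (fps_const (sc c) * Z) = fps_const (sc c) * fps_cmap (S_e0 e k kinv) Z"
    by (intro allI, rule fps_ext) (simp only: fps_cmap_nth fps_mult_left_const_nth S_e0_def right_diff_distrib mult.assoc pull_sc[OF alg])
  have "(fps_cmap (S_e0 e k kinv) ^^ (n - 1)) X = fps_const (sc (\<Prod>j=2..Suc (n - 1). 1 - q ^ (2 * (j - 1)))) * X ^ Suc (n - 1)"
    by (rule iter[OF alg lin step])
  then show ?thesis using n by (simp add: EX)
qed

lemma part3:
  fixes sc :: "'k::field_char_0 \<Rightarrow> 'a::ring_1"
    and q :: 'k and f :: "int \<Rightarrow> 'a" and k kinv :: 'a and n :: nat
  assumes alg: "central_scalars sc"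
    and q_nz: "q \<noteq> 0"
    and k_inv: "k * kinv = 1" "kinv * k = 1"
    and kf: "\<forall>m. k * f m * kinv = sc (inverse q ^ 2) * f m"
    and ff: "\<forall>m l. f (m + 1) * f l - sc (inverse q ^ 2) * f m * f (l + 1)
                 = sc (inverse q ^ 2) * f l * f (m + 1) - f (l + 1) * f m"
    and n: "n \<ge> 1"
  shows "(fps_cmap (S_f0 f k kinv) ^^ (n - 1)) (f_plus f)
           = fps_const (sc (\<Prod>j=2..n. inverse q ^ (2 * (j - 1)) - 1)) * f_plus f ^ n"
proof -
  define X where "X = Abs_fps (\<lambda>j. if j = 0 then 0 else f (int j))"
  define B where "B = fps_const (f 0)"
  define r where "r = fps_const (sc (inverse q ^ 2))"
  define \<phi> where "\<phi> = (\<lambda>x. k * x * kinv)"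
  have EX: "f_plus f = X" by (simp add: f_plus_def X_def)
  have half: "\<forall>x. sc (inverse 2) * (x + x) = x" by (rule sc_half[OF alg])
  have inv2: "sc (q ^ 2) * sc (inverse q ^ 2) = 1" using q_nz
    by (simp add: power_inverse sc_inv[OF alg])
  have base0: "X * B - fps_const (sc (inverse q ^ 2)) * B * X = fps_const (sc (inverse q ^ 2) - 1) * X ^ 2"
    unfolding X_def B_def by (rule baseN(1)[OF ff half inv2])
  have cr: "\<forall>Y. r * Y = Y * r" unfolding r_def
    by (rule fps_const_central) (simp add: sc_central[OF alg])
  have ce: "\<forall>Y. (-1) * Y = Y * (-1::'a fps)" by simp
  have base: "X * B - r * B * X = (-1) * (1 - r) * X ^ 2"
    using base0 by (simp add: r_def one_minus_fps_const)
  have pw: "X ^ m * B - r ^ m * B * X ^ m = (-1) * (1 - r ^ m) * X ^ Suc m" for m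
    by (rule powR[OF cr ce base])
  have hom: "\<forall>x y. \<phi> (x * y) = \<phi> x * \<phi> y" "\<forall>x y. \<phi> (x + y) = \<phi> x + \<phi> y" "\<phi> 0 = 0" "\<phi> 1 = 1"
    unfolding \<phi>_def using conj_hom[OF k_inv(1) k_inv(2)] by auto
  have cX: "fps_cmap \<phi> X = fps_const (sc (inverse q ^ 2)) * X"
    by (rule fps_ext) (simp add: X_def \<phi>_def kf)
  have cP: "fps_cmap \<phi> (X ^ m) = r ^ m * X ^ m" for m
    unfolding r_def fps_const_power
    by (rule cmap_power[OF hom cX]) (simp add: sc_central[OF alg])
  have op: "fps_cmap (S_f0 f k kinv) Y = Y * B - B * fps_cmap \<phi> Y" for Y
    by (rule fps_ext) (simp add: S_f0_def B_def \<phi>_def mult.assoc)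
  have crm: "\<forall>Y. r ^ m * Y = Y * r ^ m" for m by (rule central_power[OF cr])
  have step: "\<forall>m\<ge>1. fps_cmap (S_f0 f k kinv) (X ^ m) = fps_const (sc (inverse q ^ (2 * m) - 1)) * X ^ Suc m"
  proof (intro allI impI)
    fix m :: nat
    have "fps_cmap (S_f0 f k kinv) (X ^ m) = X ^ m * B - B * (r ^ m * X ^ m)" by (simp add: op cP)
    also have "B * (r ^ m * X ^ m) = r ^ m * B * X ^ m" using crm[of m] by (metis mult.assoc)
    also have "X ^ m * B - r ^ m * B * X ^ m = (-1) * (1 - r ^ m) * X ^ Suc m" by (rule pw)
    also have "(-1) * (1 - r ^ m) = fps_const (sc (inverse q ^ (2 * m) - 1))"
      by (simp add: r_def sc_diff[OF alg] sc_one[OF alg] sc_power[OF alg] power_mult one_minus_fps_const)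
    finally show "fps_cmap (S_f0 f k kinv) (X ^ m) = fps_const (sc (inverse q ^ (2 * m) - 1)) * X ^ Suc m" .
  qed
  have lin: "\<forall>c Y. fps_cmap (S_f0 f k kinv) (fps_const (sc c) * Y) = fps_const (sc c) * fps_cmap (S_f0 f k kinv) Y"
    by (intro allI, rule fps_ext) (simp only: fps_cmap_nth fps_mult_left_const_nth S_f0_def right_diff_distrib mult.assoc pull_sc[OF alg])
  have "(fps_cmap (S_f0 f k kinv) ^^ (n - 1)) X = fps_const (sc (\<Prod>j=2..Suc (n - 1). inverse q ^ (2 * (j - 1)) - 1)) * X ^ Suc (n - 1)"
    by (rule iter[OF alg lin step])
  then show ?thesis using n by (simp add: EX)
qed

lemma part4:
  fixes sc :: "'k::field_char_0 \<Rightarrow> 'a::ring_1"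
    and q :: 'k and f :: "int \<Rightarrow> 'a" and k kinv :: 'a and n :: nat
  assumes alg: "central_scalars sc"
    and q_nz: "q \<noteq> 0"
    and k_inv: "k * kinv = 1" "kinv * k = 1"
    and kf: "\<forall>m. k * f m * kinv = sc (inverse q ^ 2) * f m"
    and ff: "\<forall>m l. f (m + 1) * f l - sc (inverse q ^ 2) * f m * f (l + 1)
                 = sc (inverse q ^ 2) * f l * f (m + 1) - f (l + 1) * f m"
    and n: "n \<ge> 1"
  shows "(fps_cmap (St_f0 f k kinv) ^^ (n - 1)) (f_minus f)
           = fps_const (sc (\<Prod>j=2..n. q ^ (2 * (j - 1)) - 1)) * f_minus f ^ n"
proof -
  define Y where "Y = Abs_fps (\<lambda>j. f (- int j))"
  define X where "X = - Y"
  define B where "B = fps_const (f 0)"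
  define r where "r = fps_const (sc (q ^ 2))"
  define \<phi> where "\<phi> = (\<lambda>x. kinv * x * k)"
  have EX: "f_minus f = X" by (rule fps_ext) (simp add: f_minus_def X_def Y_def)
  have half: "\<forall>x. sc (inverse 2) * (x + x) = x" by (rule sc_half[OF alg])
  have inv1: "sc (inverse q ^ 2) * sc (q ^ 2) = 1" using q_nz
    by (simp add: power_inverse sc_inv[OF alg])
  have inv2: "sc (q ^ 2) * sc (inverse q ^ 2) = 1" using q_nz
    by (simp add: power_inverse sc_inv[OF alg])
  have rel': "\<forall>m l. f (- (m + 1)) * f (- l) - sc (q ^ 2) * f (- m) * f (- (l + 1))
     = sc (q ^ 2) * f (- l) * f (- (m + 1)) - f (- (l + 1)) * f (- m)"
    by (rule rel_neg[OF ff inv2])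
  have base0: "B * Y - fps_const (sc (q ^ 2)) * Y * B = fps_const (1 - sc (q ^ 2)) * Y ^ 2"
    using baseP(2)[where g="\<lambda>x. f (- x)" and Qa="sc (q ^ 2)" and Qia="sc (inverse q ^ 2)" and h="sc (inverse 2)",
        OF rel' half inv1]
    unfolding Y_def B_def by simp
  have cr: "\<forall>Y. r * Y = Y * r" unfolding r_def
    by (rule fps_const_central) (simp add: sc_central[OF alg])
  have ce: "\<forall>Y. (-1) * Y = Y * (-1::'a fps)" by simp
  have base: "B * X - r * X * B = (-1) * (1 - r) * X ^ 2"
  proof -
    have "B * X - r * X * B = - (B * Y - fps_const (sc (q ^ 2)) * Y * B)"
      by (simp add: X_def r_def)
    also have "\<dots> = (-1) * (1 - r) * X ^ 2" unfolding base0
      by (simp add: X_def r_def one_minus_fps_const power2_eq_square neg_fc)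
    finally show ?thesis .
  qed
  have pw: "B * X ^ m - r ^ m * X ^ m * B = (-1) * (1 - r ^ m) * X ^ Suc m" for m
    by (rule powL[OF cr ce base])
  have eig: "\<phi> (f m) = sc (q ^ 2) * f m" for m
    unfolding \<phi>_def
    using conj_eig[OF alg k_inv(2) k_inv(1) kf[rule_format, of m]] q_nz by (simp add: power_inverse)
  have hom: "\<forall>x y. \<phi> (x * y) = \<phi> x * \<phi> y" "\<forall>x y. \<phi> (x + y) = \<phi> x + \<phi> y" "\<phi> 0 = 0" "\<phi> 1 = 1"
    unfolding \<phi>_def using conj_hom[OF k_inv(2) k_inv(1)] by auto
  have cX: "fps_cmap \<phi> X = fps_const (sc (q ^ 2)) * X"
  proof (rule fps_ext)
    fix j
    have "\<phi> (- f (- int j)) = - \<phi> (f (- int j))" by (simp add: \<phi>_def)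
    then show "fps_nth (fps_cmap \<phi> X) j = fps_nth (fps_const (sc (q ^ 2)) * X) j"
      by (simp add: X_def Y_def eig)
  qed
  have cP: "fps_cmap \<phi> (X ^ m) = r ^ m * X ^ m" for m
    unfolding r_def fps_const_power
    by (rule cmap_power[OF hom cX]) (simp add: sc_central[OF alg])
  have op: "fps_cmap (St_f0 f k kinv) Z = B * Z - fps_cmap \<phi> Z * B" for Z
    by (rule fps_ext) (simp add: St_f0_def B_def \<phi>_def mult.assoc)
  have step: "\<forall>m\<ge>1. fps_cmap (St_f0 f k kinv) (X ^ m) = fps_const (sc (q ^ (2 * m) - 1)) * X ^ Suc m"
  proof (intro allI impI)
    fix m :: nat
    have "fps_cmap (St_f0 f k kinv) (X ^ m) = B * X ^ m - r ^ m * X ^ m * B" by (simp add: op cP)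
    also have "\<dots> = (-1) * (1 - r ^ m) * X ^ Suc m" by (rule pw)
    also have "(-1) * (1 - r ^ m) = fps_const (sc (q ^ (2 * m) - 1))"
      by (simp add: r_def sc_diff[OF alg] sc_one[OF alg] sc_power[OF alg] power_mult one_minus_fps_const)
    finally show "fps_cmap (St_f0 f k kinv) (X ^ m) = fps_const (sc (q ^ (2 * m) - 1)) * X ^ Suc m" .
  qed
  have lin: "\<forall>c Z. fps_cmap (St_f0 f k kinv) (fps_const (sc c) * Z) = fps_const (sc c) * fps_cmap (St_f0 f k kinv) Z"
    by (intro allI, rule fps_ext) (simp only: fps_cmap_nth fps_mult_left_const_nth St_f0_def right_diff_distrib mult.assoc pull_sc[OF alg])
  have "(fps_cmap (St_f0 f k kinv) ^^ (n - 1)) X = fps_const (sc (\<Prod>j=2..Suc (n - 1). q ^ (2 * (j - 1)) - 1)) * X ^ Suc (n - 1)"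
    by (rule iter[OF alg lin step])
  then show ?thesis using n by (simp add: EX)
qed


theorem mainTheorem5:
  fixes sc :: "'k::field_char_0 \<Rightarrow> 'a::ring_1"
    and q :: 'k and e f :: "int \<Rightarrow> 'a" and k kinv :: 'a and n :: nat
  assumes alg: "central_scalars sc"
    and q_nz: "q \<noteq> 0"
    and q_nroot: "\<forall>m::nat. m > 0 \<longrightarrow> q ^ m \<noteq> 1"
    and k_inv: "k * kinv = 1" "kinv * k = 1"
    and ke: "\<forall>m. k * e m * kinv = sc (q ^ 2) * e m"
    and kf: "\<forall>m. k * f m * kinv = sc (inverse q ^ 2) * f m"
    and ee: "\<forall>m l. e (m + 1) * e l - sc (q ^ 2) * e m * e (l + 1)
                 = sc (q ^ 2) * e l * e (m + 1) - e (l + 1) * e m"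
    and ff: "\<forall>m l. f (m + 1) * f l - sc (inverse q ^ 2) * f m * f (l + 1)
                 = sc (inverse q ^ 2) * f l * f (m + 1) - f (l + 1) * f m"
    and n: "n \<ge> 1"
  shows "(fps_cmap (St_e0 e k kinv) ^^ (n - 1)) (e_plus e)
           = fps_const (sc (\<Prod>j=2..n. 1 - inverse q ^ (2 * (j - 1)))) * e_plus e ^ n
         \<and> (fps_cmap (S_e0 e k kinv) ^^ (n - 1)) (e_minus e)
           = fps_const (sc (\<Prod>j=2..n. 1 - q ^ (2 * (j - 1)))) * e_minus e ^ n
         \<and> (fps_cmap (S_f0 f k kinv) ^^ (n - 1)) (f_plus f)
           = fps_const (sc (\<Prod>j=2..n. inverse q ^ (2 * (j - 1)) - 1)) * f_plus f ^ n
         \<and> (fps_cmap (St_f0 f k kinv) ^^ (n - 1)) (f_minus f)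
           = fps_const (sc (\<Prod>j=2..n. q ^ (2 * (j - 1)) - 1)) * f_minus f ^ n"
  by (intro conjI part1[OF alg q_nz k_inv ke ee n] part2[OF alg q_nz k_inv ke ee n]
      part3[OF alg q_nz k_inv kf ff n] part4[OF alg q_nz k_inv kf ff n])

end
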